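(* There exists a family $\mathcal{F}$ of real functions with $|\mathcal{F}| = \mathfrak{c}$ such that every $F\in\mathcal{F}$ (as a subspace of $\mathbb{R}^2$) is connected and completely metrizable, and the spaces in $\mathcal{F}$ are incomparable.
   Context: $\mathfrak{c}=2^{\aleph_0}$. A real function is a function $F:\mathbb{R}\to\mathbb{R}$, identified with its graph in $\mathbb{R}^2$ with the subspace topology. Topological spaces $X_i$ ($i\in I$) are called incomparable if, for all $i,j\in I$, whenever $X_i$ is homeomorphic to a subspace $S_j$ of $X_j$, then $i=j$ and $S_j=X_j$. *)

theory Defs
  imports "HOL-Analysis.Analysis" "HOL-Library.Equipollence"
begin

definition graph_of :: "(real \<Rightarrow> real) \<Rightarrow> (real \<times> real) set" where
  "graph_of f = {(x, f x) | x. True}"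

end

theory Submission
  imports Defs
begin


definition ind :: "int set \<Rightarrow> int \<Rightarrow> real" where
  "ind A n = (if n \<in> A then 1 else 0)"

definition fA :: "int set \<Rightarrow> real \<Rightarrow> real" where
  "fA A x = (if x \<in> \<int> then sin 1 else
     sin (1 / (x - of_int \<lfloor>x\<rfloor>) + ind A (\<lfloor>x\<rfloor> + 1) / (of_int \<lfloor>x\<rfloor> + 1 - x)))"

definition FA :: "int set \<Rightarrow> int \<Rightarrow> real \<Rightarrow> real" where
  "FA A n x = sin (1 / (x - of_int n) + ind A (n + 1) / (of_int n + 1 - x))"

lemma ind_range: "0 \<le> ind A n" "ind A n \<le> 1"
  by (auto simp: ind_def)

lemma osc_core:
  fixes a c e :: real
  assumes "0 \<le> a" "a \<le> 1" "-1 \<le> c" "c \<le> 1" "e > 0"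
  shows "\<exists>s. 0 < s \<and> s < e \<and> s \<le> 1/2 \<and> sin (1/s + a/(1-s)) = c"
proof -
  define \<psi> where "\<psi> s = 1/s + a/(1-s)" for s :: real
  define s1 where "s1 = min e (1/2) / 2"
  have s1: "0 < s1" "s1 < e" "s1 \<le> 1/4" using assms by (auto simp: s1_def)
  have "a/(1-s1) \<ge> 0" using assms s1 by auto
  hence ps1: "\<psi> s1 \<ge> 1/s1" by (simp add: \<psi>_def)
  obtain k :: nat where k: "\<psi> s1 - arcsin c \<le> real k * (2*pi)"
  proof -
    obtain k :: nat where "(\<psi> s1 - arcsin c) / (2*pi) \<le> real k" using real_arch_simple by blast
    hence "\<psi> s1 - arcsin c \<le> real k * (2*pi)" by (simp add: pos_divide_le_eq)
    thus ?thesis using that by blast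
  qed
  define y where "y = arcsin c + real k * (2*pi)"
  have y1: "y \<ge> \<psi> s1" using k by (simp add: y_def)
  have "1/s1 > 0" using s1 by auto
  hence ypos: "y > 0" using y1 ps1 by linarith
  define s0 where "s0 = 1/(y+2)"
  have s0pos: "s0 > 0" using ypos by (simp add: s0_def)
  have "y + 2 > 1/s1" using y1 ps1 by linarith
  hence "1 < s1 * (y+2)" using s1 by (simp add: divide_less_eq mult.commute)
  hence "s0 < s1" using ypos unfolding s0_def by (simp add: divide_less_eq mult.commute)
  have "a/(1-s0) \<ge> 0" using assms \<open>s0 < s1\<close> s1 by auto
  hence "\<psi> s0 \<ge> y + 2" by (simp add: \<psi>_def s0_def)
  hence ps0: "y \<le> \<psi> s0" by linarith
  have cont: "\<forall>x. s0 \<le> x \<and> x \<le> s1 \<longrightarrow> isCont \<psi> x"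
  proof (intro allI impI)
    fix x assume "s0 \<le> x \<and> x \<le> s1"
    hence "x \<noteq> 0" "1 - x \<noteq> 0" using s0pos s1 by auto
    thus "isCont \<psi> x" unfolding \<psi>_def by (intro continuous_intros) auto
  qed
  obtain s where s: "s0 \<le> s" "s \<le> s1" "\<psi> s = y"
    using IVT2[of \<psi> s1 y s0, OF y1 ps0 _ cont] \<open>s0 < s1\<close> by auto
  have "sin y = c"
  proof -
    have "sin y = sin (arcsin c + 2 * pi * of_int (int k))" unfolding y_def by (simp add: algebra_simps)
    also have "\<dots> = sin (arcsin c)"
      by (metis sin_cos_eq_iff)
    finally show ?thesis using assms by simp
  qed
  thus ?thesis using s s0pos s1 \<open>s0 < s1\<close> by (intro exI[of _ s]) (auto simp: \<psi>_def)
qed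


lemma fA_int [simp]: "fA A (of_int n) = sin 1"
  by (simp add: fA_def)

lemma fA_Ints: "x \<in> \<int> \<Longrightarrow> fA A x = sin 1"
  by (simp add: fA_def)

lemma floor_piece:
  assumes "of_int n < x" "x < of_int n + 1"
  shows "\<lfloor>x\<rfloor> = n" "x \<notin> \<int>"
proof -
  show fl: "\<lfloor>x\<rfloor> = n" using assms by (simp add: floor_eq_iff)
  show "x \<notin> \<int>"
  proof
    assume "x \<in> \<int>" then obtain m where "x = of_int m" by (auto elim: Ints_cases)
    hence "m = n" using fl by simp
    thus False using assms \<open>x = of_int m\<close> by simp
  qed
qed

lemma fA_piece:
  assumes "of_int n < x" "x < of_int n + 1"
  shows "fA A x = FA A n x"
  using floor_piece[OF assms] by (simp add: fA_def FA_def)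

lemma FA_cont:
  assumes "X \<subseteq> {of_int n<..<of_int n + 1} \<or> (n + 1 \<notin> A \<and> X \<subseteq> {of_int n<..})"
  shows "continuous_on X (FA A n)"
  using assms
proof
  assume X: "X \<subseteq> {of_int n<..<of_int n + 1}"
  show ?thesis unfolding FA_def
    by (intro continuous_intros) (use X in auto)
next
  assume X: "n + 1 \<notin> A \<and> X \<subseteq> {of_int n<..}"
  hence "FA A n x = sin (1 / (x - of_int n))" for x by (simp add: FA_def ind_def)
  hence eq: "FA A n = (\<lambda>x. sin (1 / (x - of_int n)))" by auto
  show ?thesis unfolding eq
    by (intro continuous_intros) (use X in auto)
qed

lemma fA_isCont:
  assumes "x \<notin> \<int>"
  shows "isCont (fA A) x"
proof -
  define n where "n = \<lfloor>x\<rfloor>"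
  have x1: "of_int n < x" using assms n_def
    by (metis Ints_of_int floor_correct order_le_less)
  have x2: "x < of_int n + 1" using n_def by linarith
  have "open {of_int n<..<of_int n + 1::real}" by simp
  hence ev: "eventually (\<lambda>y. y \<in> {of_int n<..<of_int n + 1::real}) (nhds x)"
    using eventually_nhds_in_open[of "{of_int n<..<of_int n + 1::real}" x] x1 x2 by auto
  have "eventually (\<lambda>y. fA A y = FA A n y) (nhds x)"
    by (rule eventually_mono[OF ev]) (auto intro: fA_piece)
  hence "isCont (fA A) x \<longleftrightarrow> isCont (FA A n) x" by (rule isCont_cong)
  moreover have "isCont (FA A n) x"
    using FA_cont[of "{of_int n<..<of_int n + 1}" n A] x1 x2
    by (simp add: continuous_on_eq_continuous_at)
  ultimately show ?thesis by simp
qed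

lemma osc_R:
  assumes "-1 \<le> c" "c \<le> 1" "e > 0"
  shows "\<exists>t. of_int n < t \<and> t < of_int n + e \<and> fA A t = c"
proof -
  obtain s where s: "0 < s" "s < e" "s \<le> 1/2" "sin (1/s + ind A (n+1)/(1-s)) = c"
    using osc_core[OF ind_range assms] by blast
  have "fA A (of_int n + s) = FA A n (of_int n + s)"
    by (rule fA_piece) (use s in auto)
  also have "\<dots> = c" using s by (simp add: FA_def)
  finally show ?thesis using s by (intro exI[of _ "of_int n + s"]) auto
qed

lemma osc_L:
  assumes "n \<in> A" "-1 \<le> c" "c \<le> 1" "e > 0"
  shows "\<exists>t. of_int n - e < t \<and> t < of_int n \<and> fA A t = c"
proof -
  obtain s where s: "0 < s" "s < e" "s \<le> 1/2" "sin (1/s + 1/(1-s)) = c"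
    using osc_core[of 1 c e] assms by auto
  have "fA A (of_int n - s) = FA A (n - 1) (of_int n - s)"
    by (rule fA_piece) (use s in auto)
  also have "\<dots> = c" using s assms by (simp add: FA_def ind_def add.commute)
  finally show ?thesis using s by (intro exI[of _ "of_int n - s"]) auto
qed

lemma fA_left_cont:
  assumes "n \<notin> A"
  shows "continuous_on {of_int n - 1/2..of_int n} (fA A)"
proof -
  have "continuous_on {of_int n - 1/2..of_int n} (FA A (n-1))"
    by (rule FA_cont) (use assms in auto)
  moreover have "FA A (n-1) x = fA A x" if "x \<in> {of_int n - 1/2..of_int n}" for x
  proof (cases "x = of_int n")
    case True thus ?thesis using assms by (simp add: FA_def ind_def)
  next
    case False thus ?thesis using that by (intro fA_piece[symmetric]) auto
  qed
  ultimately show ?thesis using continuous_on_eq by blast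
qed



definition gr :: "(real \<Rightarrow> real) \<Rightarrow> real set \<Rightarrow> (real \<times> real) set" where
  "gr f E = (\<lambda>x. (x, f x)) ` E"

lemma sin1_bounds: "-1 \<le> sin (1::real)" "sin (1::real) \<le> 1"
  by (simp_all add: sin_ge_minus_one sin_le_one)

lemma piece_conn:
  assumes "of_int n \<le> c" "c \<le> d" "d \<le> of_int n + 1"
  shows "connected (gr (fA A) {c..d})"
proof (cases "c = d")
  case True thus ?thesis by (simp add: gr_def)
next
  case False
  hence cd: "c < d" using assms by auto
  define H where "H = (\<lambda>x. (x, FA A n x))"
  define S where "S = gr (fA A) {c<..<d}"
  have HS: "S = H ` {c<..<d}" unfolding S_def gr_def H_def
    by (intro image_cong refl) (use assms in \<open>auto simp: fA_piece\<close>)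
  have contH: "continuous_on X H" if "X \<subseteq> {of_int n<..<of_int n + 1} \<or> (n + 1 \<notin> A \<and> X \<subseteq> {of_int n<..})" for X
    unfolding H_def by (intro continuous_on_Pair continuous_on_id FA_cont that)
  have "connected S" unfolding HS
    by (intro connected_continuous_image contH) (use assms in auto)
  have pc: "(c, fA A c) \<in> closure S"
  proof (cases "c = of_int n")
    case True
    show ?thesis unfolding closure_approachable
    proof (intro allI impI)
      fix e :: real assume "e > 0"
      obtain t where t: "of_int n < t" "t < of_int n + min e (d - c)" "fA A t = sin 1"
        using osc_R[OF sin1_bounds, of "min e (d - c)" n A] \<open>e > 0\<close> cd by auto
      have "(t, fA A t) \<in> S" unfolding S_def gr_def using t True by auto
      moreover have "dist (t, fA A t) (c, fA A c) < e"
        using t True by (simp add: dist_Pair_Pair dist_real_def)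
      ultimately show "\<exists>y\<in>S. dist y (c, fA A c) < e" by blast
    qed
  next
    case False
    hence cn: "of_int n < c" using assms by auto
    have cl: "closure {c<..<(c+d)/2} = {c..(c+d)/2}" using cd by simp
    have "H ` closure {c<..<(c+d)/2} \<subseteq> closure S"
    proof (rule image_closure_subset)
      show "continuous_on (closure {c<..<(c+d)/2}) H" unfolding cl
        by (rule contH) (use cn cd assms in auto)
      show "H ` {c<..<(c + d) / 2} \<subseteq> closure S" unfolding HS using closure_subset by fastforce
    qed simp
    moreover have "c \<in> closure {c<..<(c+d)/2}" using cl cd by simp
    ultimately have "H c \<in> closure S" by blast
    moreover have "H c = (c, fA A c)" unfolding H_def using cn cd assms by (simp add: fA_piece)
    ultimately show ?thesis by simp
  qed
  have pd: "(d, fA A d) \<in> closure S"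
  proof (cases "d < of_int n + 1 \<or> n + 1 \<notin> A")
    case True
    have cl: "closure {(c+d)/2<..<d} = {(c+d)/2..d}" using cd by simp
    have "H ` closure {(c+d)/2<..<d} \<subseteq> closure S"
    proof (rule image_closure_subset)
      show "continuous_on (closure {(c+d)/2<..<d}) H" unfolding cl
        by (rule contH) (use True cd assms in auto)
      show "H ` {(c+d)/2<..<d} \<subseteq> closure S" unfolding HS using closure_subset by fastforce
    qed simp
    moreover have "d \<in> closure {(c+d)/2<..<d}" using cl cd by simp
    ultimately have "H d \<in> closure S" by blast
    moreover have "H d = (d, fA A d)"
    proof (cases "d < of_int n + 1")
      case True
      have "of_int n < d" using cd assms by auto
      thus ?thesis unfolding H_def by (simp add: fA_piece[OF _ True])
    next
      case False
      hence "d = of_int n + 1" "n + 1 \<notin> A" using \<open>d < of_int n + 1 \<or> n + 1 \<notin> A\<close> assms by auto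
      moreover have "fA A (of_int n + 1) = sin 1" using fA_int[of A "n+1"] by simp
      ultimately show ?thesis unfolding H_def by (simp add: FA_def ind_def)
    qed
    ultimately show ?thesis by simp
  next
    case False
    hence dd: "d = of_int n + 1" "n + 1 \<in> A" using assms by auto
    have fd: "fA A d = sin 1" using dd fA_int[of A "n+1"] by simp
    show ?thesis unfolding closure_approachable
    proof (intro allI impI)
      fix e :: real assume "e > 0"
      obtain t where t: "of_int (n+1) - min e (d - c) < t" "t < of_int (n+1)" "fA A t = sin 1"
        using osc_L[OF dd(2) sin1_bounds, of "min e (d - c)"] \<open>e > 0\<close> cd by auto
      have "(t, fA A t) \<in> S" unfolding S_def gr_def using t dd by auto
      moreover have "dist (t, fA A t) (d, fA A d) < e"
        using t dd fd by (simp add: dist_Pair_Pair dist_real_def)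
      ultimately show "\<exists>y\<in>S. dist y (d, fA A d) < e" by blast
    qed
  qed
  have "{c..d} = {c<..<d} \<union> {c, d}" using cd by auto
  hence "gr (fA A) {c..d} = S \<union> {(c, fA A c), (d, fA A d)}"
    unfolding S_def gr_def by (simp add: image_Un)
  hence "gr (fA A) {c..d} \<subseteq> closure S" "S \<subseteq> gr (fA A) {c..d}"
    using pc pd closure_subset by auto
  thus ?thesis using connected_intermediate_closure[OF \<open>connected S\<close>] by blast
qed

lemma conn_Icc_aux:
  "\<forall>x y. x \<le> y \<and> y \<le> of_int \<lfloor>x\<rfloor> + of_nat k + 1 \<longrightarrow> connected (gr (fA A) {x..y})"
proof (induction k)
  case 0
  show ?case
  proof (intro allI impI)
    fix x y :: real assume "x \<le> y \<and> y \<le> of_int \<lfloor>x\<rfloor> + of_nat 0 + 1"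
    thus "connected (gr (fA A) {x..y})" by (intro piece_conn[of "\<lfloor>x\<rfloor>"]) auto
  qed
next
  case (Suc k)
  show ?case
  proof (intro allI impI)
    fix x y :: real assume xy: "x \<le> y \<and> y \<le> of_int \<lfloor>x\<rfloor> + of_nat (Suc k) + 1"
    show "connected (gr (fA A) {x..y})"
    proof (cases "y \<le> of_int \<lfloor>x\<rfloor> + of_nat k + 1")
      case True thus ?thesis using Suc xy by blast
    next
      case False
      define m where "m = \<lfloor>x\<rfloor> + int k + 1"
      have m1: "x \<le> of_int m" unfolding m_def by linarith
      have m2: "of_int m < y" "y \<le> of_int m + 1" using False xy unfolding m_def by auto
      have "{x..y} = {x..of_int m} \<union> {of_int m..y}" using m1 m2 by auto
      hence eq: "gr (fA A) {x..y} = gr (fA A) {x..of_int m} \<union> gr (fA A) {of_int m..y}"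
        unfolding gr_def by (simp add: image_Un)
      have c1: "connected (gr (fA A) {x..of_int m})"
        using Suc m1 unfolding m_def by auto
      have c2: "connected (gr (fA A) {of_int m..y})"
        by (rule piece_conn[of m]) (use m2 in auto)
      have "(of_int m, fA A (of_int m)) \<in> gr (fA A) {x..of_int m} \<inter> gr (fA A) {of_int m..y}"
        unfolding gr_def using m1 m2 by auto
      hence "gr (fA A) {x..of_int m} \<inter> gr (fA A) {of_int m..y} \<noteq> {}" by blast
      thus ?thesis unfolding eq using connected_Un c1 c2 by blast
    qed
  qed
qed

lemma conn_Icc: "connected (gr (fA A) {x..y})"
proof (cases "x \<le> y")
  case True
  define k where "k = nat \<lceil>y - x\<rceil>"
  have "real k \<ge> y - x" unfolding k_def by linarith
  moreover have "x < of_int \<lfloor>x\<rfloor> + 1" by linarith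
  ultimately have "y \<le> of_int \<lfloor>x\<rfloor> + of_nat k + 1" by linarith
  thus ?thesis using conn_Icc_aux[of k A] True by blast
next
  case False thus ?thesis by (simp add: gr_def)
qed

lemma graph_of_gr: "graph_of f = gr f UNIV"
  by (auto simp: graph_of_def gr_def)

lemma conn_graph: "connected (graph_of (fA A))"
proof -
  have "graph_of (fA A) = (\<Union>y. gr (fA A) {min 0 y..max 0 y})"
    unfolding graph_of_gr gr_def by force
  moreover have "connected (\<Union>y. gr (fA A) {min 0 y..max 0 y})"
  proof (rule connected_Union)
    show "\<And>s. s \<in> range (\<lambda>y. gr (fA A) {min 0 y..max 0 y}) \<Longrightarrow> connected s"
      using conn_Icc by blast
    have "(0, fA A 0) \<in> \<Inter> (range (\<lambda>y. gr (fA A) {min 0 y..max 0 y}))"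
      unfolding gr_def by force
    thus "\<Inter> (range (\<lambda>y. gr (fA A) {min 0 y..max 0 y})) \<noteq> {}" by blast
  qed
  ultimately show ?thesis by simp
qed



definition lcat :: "(real \<times> real) set \<Rightarrow> real \<times> real \<Rightarrow> bool" where
  "lcat S p \<longleftrightarrow> (\<exists>U K. open U \<and> p \<in> U \<and> compact K \<and> U \<inter> S \<subseteq> K \<and> K \<subseteq> S)"

lemma lcat_homeo:
  assumes hom: "homeomorphism S T h k" and P: "P \<subseteq> S" "p \<in> P" and lc: "lcat P p"
  shows "lcat (h ` P) (h p)"
proof -
  obtain U K where UK: "open U" "p \<in> U" "compact K" "U \<inter> P \<subseteq> K" "K \<subseteq> P"
    using lc unfolding lcat_def by blast
  have hT: "h ` S = T" using hom by (simp add: homeomorphism_def)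
  have hP: "homeomorphism P (h ` P) h k"
    by (rule homeomorphism_of_subsets[OF hom P(1)]) (use P hT in auto)
  have "openin (top_of_set P) (P \<inter> U)" using UK by (auto simp: openin_open)
  hence "openin (top_of_set (h ` P)) (h ` (P \<inter> U))"
    by (rule homeomorphism_imp_open_map[OF hP])
  then obtain V where V: "open V" "h ` (P \<inter> U) = h ` P \<inter> V"
    by (auto simp: openin_open)
  have "h p \<in> V" using V UK P by blast
  moreover have "compact (h ` K)"
  proof (rule compact_continuous_image[OF _ UK(3)])
    show "continuous_on K h" using hom UK P
      by (meson continuous_on_subset homeomorphism_def order_trans)
  qed
  moreover have "V \<inter> h ` P \<subseteq> h ` K" using V UK by blast
  moreover have "h ` K \<subseteq> h ` P" using UK by blast
  ultimately show ?thesis unfolding lcat_def using V by blast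
qed

lemma lcat_homeo_iff:
  assumes hom: "homeomorphism S T h k" and P: "P \<subseteq> S" "p \<in> P"
  shows "lcat (h ` P) (h p) \<longleftrightarrow> lcat P p"
proof
  assume lc: "lcat (h ` P) (h p)"
  have hom': "homeomorphism T S k h" using hom homeomorphism_sym by blast
  have sub: "h ` P \<subseteq> T" using hom P by (auto simp: homeomorphism_def)
  have kh: "\<forall>x\<in>S. k (h x) = x" using hom by (simp add: homeomorphism_def)
  have e1: "k ` h ` P = P"
  proof -
    have "k ` h ` P = (\<lambda>x. x) ` P" unfolding image_image by (rule image_cong) (use kh P in auto)
    thus ?thesis by simp
  qed
  have e2: "k (h p) = p" using kh P by auto
  have "lcat (k ` h ` P) (k (h p))"
    by (rule lcat_homeo[OF hom' sub _ lc]) (use P in blast)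
  thus "lcat P p" unfolding e1 e2 .
qed (rule lcat_homeo[OF hom P])

lemma LC_gen:
  assumes "continuous_on {c..d} g" "{c..d} \<subseteq> E" "c' < y" "y < d'"
    "E \<inter> {c'<..<d'} \<subseteq> {c..d}" "y \<in> E"
  shows "lcat (gr g E) (y, g y)"
proof -
  define U :: "(real \<times> real) set" where "U = {c'<..<d'} \<times> UNIV"
  define K where "K = gr g {c..d}"
  have "open U" unfolding U_def by (intro open_Times) auto
  moreover have "(y, g y) \<in> U" using assms unfolding U_def by auto
  moreover have "compact K" unfolding K_def gr_def
    by (intro compact_continuous_image continuous_on_Pair continuous_on_id assms(1)) auto
  moreover have "U \<inter> gr g E \<subseteq> K" using assms(5) unfolding U_def K_def gr_def by auto
  moreover have "K \<subseteq> gr g E" using assms(2) unfolding K_def gr_def by auto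
  ultimately show ?thesis unfolding lcat_def by blast
qed

lemma sin1_pos: "sin (1::real) > 0"
  by (rule sin_gt_zero) (use pi_gt3 in auto)

lemma NL_gen:
  assumes osc: "\<And>c e. -1 \<le> c \<Longrightarrow> c \<le> 1 \<Longrightarrow> e > 0 \<Longrightarrow> \<exists>t\<in>E. \<bar>t - x0\<bar> < e \<and> g t = c"
    and gx: "g x0 = sin 1"
  shows "\<not> lcat (gr g E) (x0, g x0)"
proof
  assume "lcat (gr g E) (x0, g x0)"
  then obtain U K where UK: "open U" "(x0, g x0) \<in> U" "compact K" "U \<inter> gr g E \<subseteq> K" "K \<subseteq> gr g E"
    unfolding lcat_def by blast
  obtain e where e: "e > 0" "ball (x0, g x0) e \<subseteq> U" using UK open_contains_ball by blast
  define c where "c = sin 1 - min (e/2) (1/2)"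
  have s1: "sin (1::real) \<le> 1" by (rule sin_le_one)
  have "min (e/2) (1/2) \<le> 1/2" "min (e/2) (1/2) > 0" using e by auto
  hence c: "-1 \<le> c" "c \<le> 1" using sin1_pos s1 unfolding c_def by linarith+
  have "(x0, c) \<in> closure K" unfolding closure_approachable
  proof (intro allI impI)
    fix \<epsilon> :: real assume "\<epsilon> > 0"
    obtain t where t: "t \<in> E" "\<bar>t - x0\<bar> < min \<epsilon> (e/2)" "g t = c"
      using osc[OF c, of "min \<epsilon> (e/2)"] \<open>\<epsilon> > 0\<close> e by auto
    have d1: "dist (t, c) (x0, c) = \<bar>t - x0\<bar>" by (simp add: dist_Pair_Pair dist_real_def)
    have d2: "dist (x0, c) (x0, g x0) = min (e/2) (1/2)" using gx e by (simp add: dist_Pair_Pair dist_real_def c_def)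
    have "dist (t, c) (x0, g x0) \<le> dist (t, c) (x0, c) + dist (x0, c) (x0, g x0)" by (rule dist_triangle)
    also have "\<dots> < e"
    proof -
      have "min (e/2) (1/2) \<le> e/2" by (rule min.cobounded1)
      moreover have "\<bar>t - x0\<bar> < e/2" using t by linarith
      ultimately show ?thesis using d1 d2 by linarith
    qed
    finally have "(t, c) \<in> U" using e by (auto simp: dist_commute)
    moreover have "(t, c) \<in> gr g E" using t unfolding gr_def by force
    ultimately have "(t, c) \<in> K" using UK by blast
    moreover have "dist (t, c) (x0, c) < \<epsilon>" using d1 t by simp
    ultimately show "\<exists>y\<in>K. dist y (x0, c) < \<epsilon>" by blast
  qed
  hence "(x0, c) \<in> K" using UK compact_imp_closed closure_closed by metis
  hence "c = g x0" using UK unfolding gr_def by auto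
  thus False using gx e unfolding c_def by auto
qed

lemma nonint_floor: "x \<notin> \<int> \<Longrightarrow> of_int \<lfloor>x\<rfloor> < x"
  by (metis Ints_of_int floor_correct order_le_less)

lemma cont_nonint:
  assumes "of_int n < a" "b < of_int n + 1"
  shows "continuous_on {a..b} (fA A)"
proof (intro continuous_at_imp_continuous_on ballI fA_isCont)
  fix y assume "y \<in> {a..b}"
  thus "y \<notin> \<int>" using floor_piece(2)[of n y] assms by auto
qed

lemma charR:
  assumes "E \<subseteq> {x..}" "\<delta> > 0" "{x..x+\<delta>} \<subseteq> E"
  shows "lcat (gr (fA A) E) (x, fA A x) \<longleftrightarrow> x \<notin> \<int>"
proof
  assume lc: "lcat (gr (fA A) E) (x, fA A x)"
  show "x \<notin> \<int>"
  proof
    assume "x \<in> \<int>"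
    then obtain n where n: "x = of_int n" by (auto elim: Ints_cases)
    have "\<not> lcat (gr (fA A) E) (x, fA A x)"
    proof (rule NL_gen)
      fix c e :: real assume "-1 \<le> c" "c \<le> 1" "e > 0"
      then obtain t where "of_int n < t" "t < of_int n + min e \<delta>" "fA A t = c"
        using osc_R[of c "min e \<delta>" n A] assms by auto
      thus "\<exists>t\<in>E. \<bar>t - x\<bar> < e \<and> fA A t = c" using n assms(3)
        by (intro bexI[of _ t]) auto
    qed (use n in simp)
    thus False using lc by simp
  qed
next
  assume nx: "x \<notin> \<int>"
  define n where "n = \<lfloor>x\<rfloor>"
  have n1: "of_int n < x" "x < of_int n + 1" using nonint_floor[OF nx] n_def by linarith+
  define d where "d = min \<delta> ((of_int n + 1 - x)/2)"
  have "d \<le> (of_int n + 1 - x)/2" unfolding d_def by (rule min.cobounded2)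
  hence d: "d > 0" "x + d < of_int n + 1" "d \<le> \<delta>" using n1 assms unfolding d_def by auto
  show "lcat (gr (fA A) E) (x, fA A x)"
  proof (rule LC_gen[of x "x + d" _ _ "x - 1" _ "x + d"])
    show "continuous_on {x..x + d} (fA A)" using n1 d by (intro cont_nonint[of n]) auto
    show "{x..x + d} \<subseteq> E" using assms(3) d(3) by (meson atLeastatMost_subset_iff order_refl add_left_mono subset_trans)
    show "E \<inter> {x - 1<..<x + d} \<subseteq> {x..x + d}" using assms(1) by auto
    show "x \<in> E" using assms(2,3) by auto
  qed (use d in simp_all)
qed

lemma charL:
  assumes "E \<subseteq> {..x}" "\<delta> > 0" "{x-\<delta>..x} \<subseteq> E"
  shows "lcat (gr (fA A) E) (x, fA A x) \<longleftrightarrow> x \<notin> of_int ` A"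
proof
  assume lc: "lcat (gr (fA A) E) (x, fA A x)"
  show "x \<notin> of_int ` A"
  proof
    assume "x \<in> of_int ` A"
    then obtain n where n: "x = of_int n" "n \<in> A" by auto
    have "\<not> lcat (gr (fA A) E) (x, fA A x)"
    proof (rule NL_gen)
      fix c e :: real assume "-1 \<le> c" "c \<le> 1" "e > 0"
      then obtain t where "of_int n - min e \<delta> < t" "t < of_int n" "fA A t = c"
        using osc_L[of n A c "min e \<delta>"] assms n by auto
      thus "\<exists>t\<in>E. \<bar>t - x\<bar> < e \<and> fA A t = c" using n assms(3)
        by (intro bexI[of _ t]) auto
    qed (use n in simp)
    thus False using lc by simp
  qed
next
  assume nx: "x \<notin> of_int ` A"
  show "lcat (gr (fA A) E) (x, fA A x)"
  proof (cases "x \<in> \<int>")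
    case False
    define n where "n = \<lfloor>x\<rfloor>"
    have n1: "of_int n < x" "x < of_int n + 1" using nonint_floor[OF False] n_def by linarith+
    define d where "d = min \<delta> ((x - of_int n)/2)"
    have "d \<le> (x - of_int n)/2" unfolding d_def by (rule min.cobounded2)
    hence d: "d > 0" "of_int n < x - d" "d \<le> \<delta>" using n1 assms unfolding d_def by auto
    show ?thesis
    proof (rule LC_gen[of "x - d" x _ _ "x - d" _ "x + 1"])
      show "continuous_on {x - d..x} (fA A)" using n1 d by (intro cont_nonint[of n]) auto
      show "{x - d..x} \<subseteq> E" using assms(3) d(3) by (meson atLeastatMost_subset_iff order_refl diff_left_mono subset_trans)
      show "E \<inter> {x - d<..<x + 1} \<subseteq> {x - d..x}" using assms(1) by auto
      show "x \<in> E" using assms(2,3) by auto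
    qed (use d in simp_all)
  next
    case True
    then obtain n where n: "x = of_int n" by (auto elim: Ints_cases)
    have nA: "n \<notin> A" using nx n by auto
    define d where "d = min \<delta> (1/2)"
    have d: "d > 0" "d \<le> 1/2" "d \<le> \<delta>" using assms unfolding d_def by auto
    show ?thesis
    proof (rule LC_gen[of "x - d" x _ _ "x - d" _ "x + 1"])
      show "continuous_on {x - d..x} (fA A)"
        by (rule continuous_on_subset[OF fA_left_cont[OF nA]]) (use n d in auto)
      show "{x - d..x} \<subseteq> E" using assms(3) d(3) by (meson atLeastatMost_subset_iff order_refl diff_left_mono subset_trans)
      show "E \<inter> {x - d<..<x + 1} \<subseteq> {x - d..x}" using assms(1) by auto
      show "x \<in> E" using assms(2,3) by auto
    qed (use d in simp_all)
  qed
qed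



lemma gdelta_graph: "completely_metrizable_space (subtopology euclidean (graph_of (fA A)))"
proof -
  define W where "W = {p :: real \<times> real. fst p \<notin> \<int>}"
  have "W = fst -` (- \<int>)" unfolding W_def by auto
  hence oW: "open W" by (simp add: open_vimage_fst open_Compl)
  have cf: "continuous_on (- \<int>) (fA A)"
    by (intro continuous_at_imp_continuous_on ballI fA_isCont) auto
  have c2: "continuous_on W (\<lambda>p. fA A (fst p))"
    by (rule continuous_on_compose2[OF cf continuous_on_fst]) (auto simp: W_def)
  have "continuous_on W (\<lambda>p. snd p - fA A (fst p))"
    by (intro continuous_on_diff continuous_on_snd c2 continuous_on_id)
  hence "closedin (top_of_set W) {p \<in> W. snd p - fA A (fst p) = 0}"
    by (rule continuous_closedin_preimage_constant)
  then obtain T where T: "closed T" "{p \<in> W. snd p - fA A (fst p) = 0} = W \<inter> T"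
    unfolding closedin_closed by blast
  define E2 where "E2 = (\<int> :: real set) \<times> {sin (1::real)}"
  have cE2: "closed E2" unfolding E2_def by (intro closed_Times closed_Ints closed_singleton)
  have "graph_of (fA A) = {p \<in> W. snd p - fA A (fst p) = 0} \<union> E2"
  proof (rule set_eqI)
    fix p :: "real \<times> real"
    obtain x y where p: "p = (x, y)" by fastforce
    show "p \<in> graph_of (fA A) \<longleftrightarrow> p \<in> {p \<in> W. snd p - fA A (fst p) = 0} \<union> E2"
      unfolding p graph_of_def W_def E2_def by (cases "x \<in> \<int>") (auto simp: fA_Ints)
  qed
  hence eq: "graph_of (fA A) = (W \<inter> T) \<union> E2" using T by simp
  have met: "metrizable_space (euclidean :: (real \<times> real) topology)"
    by (rule metrizable_space_euclidean)
  have g1: "gdelta_in euclidean W" using oW by (simp add: open_imp_gdelta_in)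
  have g2: "gdelta_in euclidean T" using T(1) by (simp add: closed_imp_gdelta_in[OF met])
  have g3: "gdelta_in euclidean E2" using cE2 by (simp add: closed_imp_gdelta_in[OF met])
  have "gdelta_in euclidean (graph_of (fA A))" unfolding eq
    by (rule gdelta_in_Un[OF gdelta_in_Int[OF g1 g2] g3])
  thus ?thesis
    by (intro completely_metrizable_space_gdelta_in completely_metrizable_space_euclidean)
qed



lemma betw:
  fixes \<phi> :: "real \<Rightarrow> real"
  assumes inj: "inj \<phi>" and conn: "\<And>a b. connected (\<phi> ` {a..b})" and abc: "a < b" "b < c"
  shows "(\<phi> a < \<phi> b \<and> \<phi> b < \<phi> c) \<or> (\<phi> b < \<phi> a \<and> \<phi> c < \<phi> b)"
proof -
  have int: "y = \<phi> b" if y1: "y \<in> \<phi> ` {a..b}" and y2: "y \<in> \<phi> ` {b..c}" for y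
  proof -
    obtain u where u: "u \<in> {a..b}" "y = \<phi> u" using y1 by blast
    obtain v where v: "v \<in> {b..c}" "y = \<phi> v" using y2 by blast
    have "u = v" using u v inj by (metis injD)
    thus ?thesis using u v by auto
  qed
  have ne: "\<phi> a \<noteq> \<phi> b" "\<phi> b \<noteq> \<phi> c" using abc inj by (metis injD less_irrefl)+
  have ia: "\<phi> a \<in> \<phi> ` {a..b}" "\<phi> b \<in> \<phi> ` {a..b}" using abc by auto
  have ib: "\<phi> b \<in> \<phi> ` {b..c}" "\<phi> c \<in> \<phi> ` {b..c}" using abc by auto
  have s1: "{u..v} \<subseteq> \<phi> ` {a..b}" if "u \<in> \<phi> ` {a..b}" "v \<in> \<phi> ` {a..b}" for u v
    by (rule connected_contains_Icc[OF conn that])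
  have s2: "{u..v} \<subseteq> \<phi> ` {b..c}" if "u \<in> \<phi> ` {b..c}" "v \<in> \<phi> ` {b..c}" for u v
    by (rule connected_contains_Icc[OF conn that])
  show ?thesis
  proof (rule ccontr)
    assume nc: "\<not> ?thesis"
    show False
    proof (cases "\<phi> a < \<phi> b")
      case True
      hence c: "\<phi> c < \<phi> b" using nc ne by auto
      show False
      proof (cases "\<phi> a \<le> \<phi> c")
        case True
        hence "\<phi> c \<in> \<phi> ` {a..b}" using s1[OF ia] c by auto
        thus False using int[OF _ ib(2)] ne by auto
      next
        case False
        hence "\<phi> a \<in> \<phi> ` {b..c}" using s2[OF ib(2) ib(1)] \<open>\<phi> a < \<phi> b\<close> by auto
        thus False using int[OF ia(1)] ne by auto
      qed
    next
      case False
      hence a: "\<phi> b < \<phi> a" using ne by auto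
      hence c: "\<phi> b < \<phi> c" using nc ne by auto
      show False
      proof (cases "\<phi> c \<le> \<phi> a")
        case True
        hence "\<phi> c \<in> \<phi> ` {a..b}" using s1[OF ia(2) ia(1)] c by auto
        thus False using int[OF _ ib(2)] ne by auto
      next
        case False
        hence "\<phi> a \<in> \<phi> ` {b..c}" using s2[OF ib] a by auto
        thus False using int[OF ia(1)] ne by auto
      qed
    qed
  qed
qed

lemma mono_or_anti:
  fixes \<phi> :: "real \<Rightarrow> real"
  assumes inj: "inj \<phi>" and conn: "\<And>a b. connected (\<phi> ` {a..b})"
  shows "(\<forall>x y. x < y \<longrightarrow> \<phi> x < \<phi> y) \<or> (\<forall>x y. x < y \<longrightarrow> \<phi> y < \<phi> x)"
proof -
  note T = betw[OF inj conn]
  have ne: "\<phi> x \<noteq> \<phi> y" if "x \<noteq> y" for x y using inj that by (metis injD)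
  have orient: "\<phi> x < \<phi> y \<longleftrightarrow> \<phi> L < \<phi> R" if "L < x" "x < y" "y < R" for L x y R
  proof -
    have "\<phi> x < \<phi> y \<longleftrightarrow> \<phi> L < \<phi> y" using T[of L x y] that by auto
    moreover have "\<phi> L < \<phi> y \<longleftrightarrow> \<phi> L < \<phi> R" using T[of L y R] that by auto
    ultimately show ?thesis by simp
  qed
  show ?thesis
  proof (rule ccontr)
    assume "\<not> ?thesis"
    then obtain x y u v where xy: "x < y" "\<not> \<phi> x < \<phi> y" and uv: "u < v" "\<not> \<phi> v < \<phi> u" by auto
    define L where "L = min x u - 1"
    define R where "R = max y v + 1"
    have "\<phi> x < \<phi> y \<longleftrightarrow> \<phi> L < \<phi> R" by (rule orient) (use xy in \<open>auto simp: L_def R_def\<close>)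
    moreover have "\<phi> u < \<phi> v \<longleftrightarrow> \<phi> L < \<phi> R" by (rule orient) (use uv in \<open>auto simp: L_def R_def\<close>)
    moreover have "\<phi> u < \<phi> v" using uv ne[of u v] by auto
    ultimately show False using xy by simp
  qed
qed

lemma gr_image: "(\<lambda>x. (\<phi> x, g (\<phi> x))) ` E = gr g (\<phi> ` E)"
  unfolding gr_def by auto

lemma fst_gr: "fst ` gr g E = E"
  unfolding gr_def by force

lemma main:
  fixes A B :: "int set"
  assumes A0: "\<And>n. n \<le> 0 \<Longrightarrow> n \<in> A" "1 \<notin> A"
    and B0: "\<And>n. n \<le> 0 \<Longrightarrow> n \<in> B" "1 \<notin> B"
    and S: "S \<subseteq> graph_of (fA B)" and hom: "homeomorphism (graph_of (fA A)) S h k"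
  shows "A = B \<and> S = graph_of (fA B)"
proof -
  define f where "f = fA A"
  define g where "g = fA B"
  define \<phi> where "\<phi> x = fst (h (x, f x))" for x
  have hG: "h ` graph_of f = S" using hom unfolding f_def by (simp add: homeomorphism_def)
  have kh: "\<And>p. p \<in> graph_of f \<Longrightarrow> k (h p) = p" using hom unfolding f_def by (simp add: homeomorphism_def)
  have hcont: "continuous_on (graph_of f) h" using hom unfolding f_def by (simp add: homeomorphism_def)
  have inG: "(x, f x) \<in> graph_of f" for x unfolding graph_of_def by auto
  have hx: "h (x, f x) = (\<phi> x, g (\<phi> x))" for x
  proof -
    have "h (x, f x) \<in> graph_of g" using hG S inG[of x] unfolding g_def by blast
    then obtain y where "h (x, f x) = (y, g y)" unfolding graph_of_def by auto
    thus ?thesis unfolding \<phi>_def by simp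
  qed
  have inj: "inj \<phi>"
  proof (rule injI)
    fix x y assume "\<phi> x = \<phi> y"
    hence "h (x, f x) = h (y, f y)" using hx by simp
    hence "(x, f x) = (y, f y)" using kh[OF inG[of x]] kh[OF inG[of y]] by metis
    thus "x = y" by simp
  qed
  have himg: "h ` gr f E = gr g (\<phi> ` E)" for E
  proof -
    have "h ` gr f E = (\<lambda>x. h (x, f x)) ` E" unfolding gr_def image_image by simp
    also have "\<dots> = (\<lambda>x. (\<phi> x, g (\<phi> x))) ` E" using hx by simp
    finally show ?thesis by (simp add: gr_image)
  qed
  have grsub: "gr f E \<subseteq> graph_of f" for E unfolding gr_def graph_of_def by auto
  have connimg: "connected (\<phi> ` E)" if "connected (gr f E)" for E
  proof -
    have "connected (h ` gr f E)"
      by (rule connected_continuous_image[OF continuous_on_subset[OF hcont grsub] that])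
    hence "connected (fst ` gr g (\<phi> ` E))" unfolding himg
      by (intro connected_continuous_image continuous_on_fst continuous_on_id)
    thus ?thesis by (simp add: fst_gr)
  qed
  have conn: "connected (\<phi> ` {a..b})" for a b
    by (rule connimg) (simp add: f_def conn_Icc)
  have connU: "connected (range \<phi>)"
    by (rule connimg) (simp add: f_def conn_graph flip: graph_of_gr)
  have transfer: "lcat (gr f E) (x, f x) \<longleftrightarrow> lcat (gr g (\<phi> ` E)) (\<phi> x, g (\<phi> x))" if "x \<in> E" for E x
  proof -
    have "lcat (h ` gr f E) (h (x, f x)) \<longleftrightarrow> lcat (gr f E) (x, f x)"
      by (rule lcat_homeo_iff[OF hom[folded f_def] grsub]) (use that in \<open>auto simp: gr_def\<close>)
    thus ?thesis unfolding himg hx by simp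
  qed
  have icc: "{u..v} \<subseteq> \<phi> ` {a..b}" if "u \<in> \<phi> ` {a..b}" "v \<in> \<phi> ` {a..b}" for u v a b
    by (rule connected_contains_Icc[OF conn that])
  have fR: "lcat (gr f {x..}) (x, f x) \<longleftrightarrow> x \<notin> \<int>" for x
    unfolding f_def by (rule charR[of _ _ 1]) auto
  have fL: "lcat (gr f {..x}) (x, f x) \<longleftrightarrow> x \<notin> of_int ` A" for x
    unfolding f_def by (rule charL[of _ _ 1]) auto
  have orient_cases: "(\<forall>x y. x < y \<longrightarrow> \<phi> x < \<phi> y) \<or> (\<forall>x y. x < y \<longrightarrow> \<phi> y < \<phi> x)"
    by (rule mono_or_anti[OF inj conn])
  show ?thesis
  proof (cases "\<forall>x y. x < y \<longrightarrow> \<phi> x < \<phi> y")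
    case False
    hence dec: "\<And>x y. x < y \<Longrightarrow> \<phi> y < \<phi> x" using orient_cases by blast
    have decle: "\<phi> y \<le> \<phi> x" if "x \<le> y" for x y using dec[of x y] that by (cases "x = y") auto
    have Z: "x \<in> \<int> \<longleftrightarrow> \<phi> x \<in> of_int ` B" for x
    proof -
      have sub: "\<phi> ` {x..} \<subseteq> {..\<phi> x}" using decle by auto
      have "{\<phi> (x+1)..\<phi> x} \<subseteq> \<phi> ` {x..x+1}" by (rule icc) auto
      also have "\<dots> \<subseteq> \<phi> ` {x..}" by auto
      finally have sup: "{\<phi> x - (\<phi> x - \<phi> (x+1))..\<phi> x} \<subseteq> \<phi> ` {x..}" by simp
      have pos: "\<phi> x - \<phi> (x+1) > 0" using dec[of x "x+1"] by simp
      have "lcat (gr g (\<phi> ` {x..})) (\<phi> x, g (\<phi> x)) \<longleftrightarrow> \<phi> x \<notin> of_int ` B"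
        unfolding g_def by (rule charL[OF sub pos sup])
      thus ?thesis using transfer[of x "{x..}"] fR[of x] by auto
    qed
    have AZ: "x \<in> of_int ` A \<longleftrightarrow> \<phi> x \<in> \<int>" for x
    proof -
      have sub: "\<phi> ` {..x} \<subseteq> {\<phi> x..}" using decle by auto
      have "{\<phi> x..\<phi> (x-1)} \<subseteq> \<phi> ` {x-1..x}" by (rule icc) auto
      also have "\<dots> \<subseteq> \<phi> ` {..x}" by auto
      finally have sup: "{\<phi> x..\<phi> x + (\<phi> (x-1) - \<phi> x)} \<subseteq> \<phi> ` {..x}" by simp
      have pos: "\<phi> (x-1) - \<phi> x > 0" using dec[of "x-1" x] by simp
      have "lcat (gr g (\<phi> ` {..x})) (\<phi> x, g (\<phi> x)) \<longleftrightarrow> \<phi> x \<notin> \<int>"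
        unfolding g_def by (rule charR[OF sub pos sup])
      thus ?thesis using transfer[of x "{..x}"] fL[of x] by auto
    qed
    have "\<phi> 1 \<in> of_int ` B" using Z[of 1] by simp
    hence "\<phi> 1 \<in> \<int>" by auto
    hence "(1::real) \<in> of_int ` A" using AZ by blast
    hence "1 \<in> A" by (metis image_iff of_int_eq_1_iff)
    thus ?thesis using A0 by blast
  next
    case True
    hence inc: "\<And>x y. x < y \<Longrightarrow> \<phi> x < \<phi> y" by blast
    have incle: "\<phi> x \<le> \<phi> y" if "x \<le> y" for x y using inc[of x y] that by (cases "x = y") auto
    have Z: "x \<in> \<int> \<longleftrightarrow> \<phi> x \<in> \<int>" for x
    proof -
      have sub: "\<phi> ` {x..} \<subseteq> {\<phi> x..}" using incle by auto
      have "{\<phi> x..\<phi> (x+1)} \<subseteq> \<phi> ` {x..x+1}" by (rule icc) auto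
      also have "\<dots> \<subseteq> \<phi> ` {x..}" by auto
      finally have sup: "{\<phi> x..\<phi> x + (\<phi> (x+1) - \<phi> x)} \<subseteq> \<phi> ` {x..}" by simp
      have pos: "\<phi> (x+1) - \<phi> x > 0" using inc[of x "x+1"] by simp
      have "lcat (gr g (\<phi> ` {x..})) (\<phi> x, g (\<phi> x)) \<longleftrightarrow> \<phi> x \<notin> \<int>"
        unfolding g_def by (rule charR[OF sub pos sup])
      thus ?thesis using transfer[of x "{x..}"] fR[of x] by auto
    qed
    have AB: "x \<in> of_int ` A \<longleftrightarrow> \<phi> x \<in> of_int ` B" for x
    proof -
      have sub: "\<phi> ` {..x} \<subseteq> {..\<phi> x}" using incle by auto
      have "{\<phi> (x-1)..\<phi> x} \<subseteq> \<phi> ` {x-1..x}" by (rule icc) auto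
      also have "\<dots> \<subseteq> \<phi> ` {..x}" by auto
      finally have sup: "{\<phi> x - (\<phi> x - \<phi> (x-1))..\<phi> x} \<subseteq> \<phi> ` {..x}" by simp
      have pos: "\<phi> x - \<phi> (x-1) > 0" using inc[of "x-1" x] by simp
      have "lcat (gr g (\<phi> ` {..x})) (\<phi> x, g (\<phi> x)) \<longleftrightarrow> \<phi> x \<notin> of_int ` B"
        unfolding g_def by (rule charL[OF sub pos sup])
      thus ?thesis using transfer[of x "{..x}"] fL[of x] by auto
    qed
    have step: "\<phi> (of_int n + 1) = \<phi> (of_int n) + 1" for n :: int
    proof -
      obtain a where a: "\<phi> (of_int n) = of_int a" using Z[of "of_int n"] by (auto elim: Ints_cases)
      obtain b where b: "\<phi> (of_int n + 1) = of_int b" using Z[of "of_int n + 1"] by (auto elim: Ints_cases)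
      have "of_int a < (of_int b :: real)" using inc[of "of_int n" "of_int n + 1"] a b by simp
      hence ab: "a < b" by simp
      show ?thesis
      proof (rule ccontr)
        assume "\<phi> (of_int n + 1) \<noteq> \<phi> (of_int n) + 1"
        hence "b \<noteq> a + 1" using a b by (metis of_int_add of_int_1)
        hence ab2: "a + 1 < b" using ab by linarith
        have "of_int (a + 1) \<in> {\<phi> (of_int n)..\<phi> (of_int n + 1)}" using a b ab2 by simp
        also have "\<dots> \<subseteq> \<phi> ` {of_int n..of_int n + 1}" by (rule icc) auto
        finally obtain z where z: "z \<in> {of_int n..of_int n + 1}" "\<phi> z = of_int (a + 1)" by auto
        have "z \<in> \<int>" using Z[of z] z by simp
        moreover have "z \<noteq> of_int n" using z a by auto
        moreover have "z \<noteq> of_int n + 1" using z b ab2 by auto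
        ultimately have "of_int n < z" "z < of_int n + 1" "z \<in> \<int>" using z by auto
        thus False using floor_piece(2) by blast
      qed
    qed
    have phin: "\<phi> (of_int n) = \<phi> 0 + of_int n" for n :: int
    proof (induction n rule: int_induct[where k = 0])
      case base show ?case by simp
    next
      case (step1 i) thus ?case using step[of i] by simp
    next
      case (step2 i) thus ?case using step[of "i - 1"] by simp
    qed
    obtain c :: int where c: "\<phi> 0 = of_int c" using Z[of 0] by (auto elim: Ints_cases)
    have AB': "n \<in> A \<longleftrightarrow> n + c \<in> B" for n
    proof -
      have "n \<in> A \<longleftrightarrow> (of_int n :: real) \<in> of_int ` A" by (auto simp: image_iff)
      also have "\<dots> \<longleftrightarrow> \<phi> (of_int n) \<in> of_int ` B" by (rule AB)
      also have "\<phi> (of_int n) = of_int (n + c)" using phin[of n] c by simp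
      also have "(of_int (n + c) :: real) \<in> of_int ` B \<longleftrightarrow> n + c \<in> B"
        by (auto simp: image_iff simp del: of_int_add)
      finally show ?thesis .
    qed
    have c0: "c = 0"
    proof (rule ccontr)
      assume "c \<noteq> 0"
      show False
      proof (cases "c > 0")
        case True
        hence "1 - c \<in> A" using A0 by auto
        thus False using AB'[of "1 - c"] B0 by simp
      next
        case False
        hence "1 + c \<in> B" using B0 \<open>c \<noteq> 0\<close> by auto
        thus False using AB'[of 1] A0 by simp
      qed
    qed
    have AeqB: "A = B" using AB' c0 by auto
    have phiint: "\<phi> (of_int n) = of_int n" for n using phin[of n] c c0 by simp
    have "range \<phi> = UNIV"
    proof (rule set_eqI, rule iffI)
      fix y :: real
      have "\<phi> (of_int \<lfloor>y\<rfloor>) \<in> range \<phi>" "\<phi> (of_int (\<lfloor>y\<rfloor> + 1)) \<in> range \<phi>" by auto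
      hence "{of_int \<lfloor>y\<rfloor>..of_int (\<lfloor>y\<rfloor> + 1)} \<subseteq> range \<phi>"
        using connected_contains_Icc[OF connU] phiint by metis
      moreover have "y \<in> {of_int \<lfloor>y\<rfloor>..of_int (\<lfloor>y\<rfloor> + 1)}" by simp
      ultimately show "y \<in> range \<phi>" by blast
    qed simp
    have "S = gr g UNIV"
      using hG himg[of UNIV] \<open>range \<phi> = UNIV\<close> by (simp add: graph_of_gr)
    thus ?thesis using AeqB by (simp add: g_def graph_of_gr)
  qed
qed



definition qq :: "nat \<Rightarrow> real" where "qq = from_nat_into \<rat>"

definition Aset :: "real \<Rightarrow> int set" where
  "Aset t = {n. n \<le> 0} \<union> {int k + 2 | k. qq k < t}"

lemma Aset_props: "n \<le> 0 \<Longrightarrow> n \<in> Aset t" "1 \<notin> Aset t"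
  unfolding Aset_def by auto

lemma Aset_inj_aux:
  assumes "s < t" shows "Aset s \<noteq> Aset t"
proof -
  obtain r where r: "r \<in> \<rat>" "s < r" "r < t" using Rats_dense_in_real[OF assms] by blast
  have "range qq = \<rat>" unfolding qq_def
    by (rule range_from_nat_into) (auto simp: countable_rat)
  then obtain k where k: "qq k = r" using r by (metis rangeE)
  have "int k + 2 \<in> Aset t" unfolding Aset_def using k r by auto
  moreover have "int k + 2 \<notin> Aset s" unfolding Aset_def using k r by auto
  ultimately show ?thesis by blast
qed

lemma Aset_inj: "inj Aset"
proof (rule injI)
  fix s t assume "Aset s = Aset t"
  thus "s = t" using Aset_inj_aux[of s t] Aset_inj_aux[of t s] by (cases s t rule: linorder_cases) auto
qed

theorem theorem3:
  shows "\<exists>\<F> :: (real \<Rightarrow> real) set.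
           \<F> \<approx> (UNIV :: real set) \<and>
           (\<forall>f\<in>\<F>. connected (graph_of f) \<and>
                  completely_metrizable_space (subtopology euclidean (graph_of f))) \<and>
           (\<forall>f\<in>\<F>. \<forall>g\<in>\<F>. \<forall>S. S \<subseteq> graph_of g \<and> graph_of f homeomorphic S
                  \<longrightarrow> f = g \<and> S = graph_of g)"
proof (intro exI conjI)
  define \<F> where "\<F> = (\<lambda>t. fA (Aset t)) ` UNIV"
  have main': "Aset s = Aset t \<and> S = graph_of (fA (Aset t))"
    if S1: "S \<subseteq> graph_of (fA (Aset t))" and S2: "graph_of (fA (Aset s)) homeomorphic S" for s t S
  proof -
    obtain h k where "homeomorphism (graph_of (fA (Aset s))) S h k"
      using S2 unfolding homeomorphic_def by blast
    thus ?thesis using main[OF Aset_props(1) Aset_props(2) Aset_props(1) Aset_props(2) S1] by blast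
  qed
  have "inj (\<lambda>t. fA (Aset t))"
  proof (rule injI)
    fix s t assume eq: "fA (Aset s) = fA (Aset t)"
    have "graph_of (fA (Aset s)) homeomorphic graph_of (fA (Aset t))"
      unfolding eq homeomorphic_def using homeomorphism_ident by blast
    hence "Aset s = Aset t" using main'[of "graph_of (fA (Aset t))" t s] by blast
    thus "s = t" using Aset_inj by (simp add: inj_eq)
  qed
  thus "\<F> \<approx> (UNIV :: real set)" unfolding \<F>_def by (rule inj_on_image_eqpoll_self)
  show "\<forall>f\<in>\<F>. connected (graph_of f) \<and> completely_metrizable_space (subtopology euclidean (graph_of f))"
    unfolding \<F>_def using conn_graph gdelta_graph by blast
  show "\<forall>f\<in>\<F>. \<forall>g\<in>\<F>. \<forall>S. S \<subseteq> graph_of g \<and> graph_of f homeomorphic S \<longrightarrow> f = g \<and> S = graph_of g"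
  proof (intro ballI allI impI)
    fix f g S assume f: "f \<in> \<F>" and g: "g \<in> \<F>" and H: "S \<subseteq> graph_of g \<and> graph_of f homeomorphic S"
    obtain s where s: "f = fA (Aset s)" using f unfolding \<F>_def by blast
    obtain t where t: "g = fA (Aset t)" using g unfolding \<F>_def by blast
    have "Aset s = Aset t \<and> S = graph_of (fA (Aset t))"
      by (rule main') (use H s t in simp_all)
    thus "f = g \<and> S = graph_of g" using s t by simp
  qed
qed


end
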